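(* For every matroid $M$, the Borsuk number of $M$ equals the Borsuk number of its matroid polytope: $f(M)=f(P_M)$.
   Context: For a matroid $M$ on ground set $E$, $\mathcal{B}(M)$ denotes its set of bases, and the distance between two bases $B,B'$ is $|B\triangle B'|$; $\operatorname{diam}$ denotes diameter. The Borsuk number $f(M)$ is the minimum number of parts in a partition of $\mathcal{B}(M)$ in which every part has diameter strictly smaller than $\operatorname{diam}(\mathcal{B}(M))$; if $M$ has exactly one basis, $f(M):=+\infty$. For $S\subseteq E$, $\chi^S\in\{0,1\}^E$ is its indicator vector. The matroid polytope $P_M\subset\mathbb{R}^E$ is the convex hull of $\{\chi^B: B\in\mathcal{B}(M)\}$. For a bounded set $S$ in Euclidean space, $f(S)$ is the minimum number of parts in a partition of $S$ into parts of Euclidean diameter strictly smaller than that of $S$ ($+\infty$ if none exists). *)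

theory Defs
  imports "HOL-Analysis.Analysis" "HOL-Library.Disjoint_Sets" "HOL-Library.Extended_Nat"
begin

definition is_matroid_bases :: "'a set \<Rightarrow> 'a set set \<Rightarrow> bool" where
  "is_matroid_bases E Bs \<longleftrightarrow> finite E \<and> Bs \<noteq> {} \<and> (\<forall>B\<in>Bs. B \<subseteq> E) \<and>
     (\<forall>B1\<in>Bs. \<forall>B2\<in>Bs. \<forall>x\<in>B1 - B2. \<exists>y\<in>B2 - B1. insert y (B1 - {x}) \<in> Bs)"

definition basis_dist :: "'a set \<Rightarrow> 'a set \<Rightarrow> nat" where
  "basis_dist B B' = card ((B - B') \<union> (B' - B))"

definition bases_diam :: "'a set set \<Rightarrow> nat" where
  "bases_diam X = Max ((\<lambda>(B, B'). basis_dist B B') ` (X \<times> X))"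

definition matroid_borsuk :: "'a set set \<Rightarrow> enat" where
  "matroid_borsuk Bs = (if card Bs = 1 then \<infinity> else
     Inf {enat (card P) | P. partition_on Bs P \<and> (\<forall>X\<in>P. bases_diam X < bases_diam Bs)})"

text \<open>Borsuk number of a set in Euclidean space (Inf {} = \<infinity>).\<close>
definition borsuk_number :: "('b::metric_space) set \<Rightarrow> enat" where
  "borsuk_number S = Inf {enat (card P) | P. finite P \<and> partition_on S P \<and>
      (\<forall>X\<in>P. diameter X < diameter S)}"

definition indicator_vec :: "('a::finite) set \<Rightarrow> real ^ 'a" where
  "indicator_vec B = (\<chi> i. if i \<in> B then 1 else 0)"

definition matroid_polytope :: "('a::finite) set set \<Rightarrow> (real ^ 'a) set" where
  "matroid_polytope Bs = convex hull (indicator_vec ` Bs)"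

end

theory Submission imports Defs begin

lemma iv_comp: "indicator_vec B $ i = (if i \<in> B then 1 else 0)"
  by (simp add: indicator_vec_def)

lemma iv_inj: "inj indicator_vec"
proof (rule injI)
  fix B C :: "'a::finite set" assume "indicator_vec B = indicator_vec C"
  hence "\<forall>i. indicator_vec B $ i = indicator_vec C $ i" by simp
  thus "B = C" by (auto simp: iv_comp split: if_splits)
qed

lemma dist_iv: "dist (indicator_vec B) (indicator_vec C) = sqrt (real (basis_dist B C))"
proof -
  have "dist (indicator_vec B) (indicator_vec C) = sqrt (\<Sum>i\<in>UNIV. (indicator_vec B $ i - indicator_vec C $ i)\<^sup>2)"
    by (simp add: dist_norm norm_vec_def L2_set_def)
  also have "(\<Sum>i\<in>UNIV. (indicator_vec B $ i - indicator_vec C $ i)\<^sup>2) = (\<Sum>i\<in>UNIV. if i \<in> (B - C) \<union> (C - B) then 1 else (0::real))"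
    by (rule sum.cong) (auto simp: iv_comp)
  also have "\<dots> = real (card ((B - C) \<union> (C - B)))"
    apply (simp add: sum.If_cases)
    apply (rule arg_cong[where f=card]) by auto
  finally show ?thesis unfolding basis_dist_def .
qed

lemma hull_repr:
  fixes Bs :: "'a::finite set set"
  assumes "x \<in> matroid_polytope Bs"
  shows "\<exists>u. (\<forall>B\<in>Bs. 0 \<le> u B) \<and> sum u Bs = 1 \<and> (\<Sum>B\<in>Bs. u B *\<^sub>R indicator_vec B) = x"
proof -
  have "finite (indicator_vec ` Bs)" by simp
  from assms[unfolded matroid_polytope_def convex_hull_finite[OF this]]
  obtain u where u: "\<forall>y\<in>indicator_vec ` Bs. 0 \<le> u y" "sum u (indicator_vec ` Bs) = 1"
    "(\<Sum>y\<in>indicator_vec ` Bs. u y *\<^sub>R y) = x" by blast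
  have inj: "inj_on indicator_vec Bs" using iv_inj by (metis inj_on_subset subset_UNIV)
  show ?thesis
    apply (rule exI[of _ "u \<circ> indicator_vec"])
    using u sum.reindex[OF inj, of u] sum.reindex[OF inj, of "\<lambda>y. u y *\<^sub>R y"] by auto
qed

lemma dist_bound:
  fixes v :: "'b \<Rightarrow> 'c::real_normed_vector"
  assumes "sum u S = 1" "sum w S = 1" "\<forall>B\<in>S. 0 \<le> u B" "\<forall>B\<in>S. 0 \<le> w B"
  shows "dist (\<Sum>B\<in>S. u B *\<^sub>R v B) (\<Sum>C\<in>S. w C *\<^sub>R v C) \<le> (\<Sum>B\<in>S. \<Sum>C\<in>S. u B * w C * dist (v B) (v C))"
proof -
  have e1: "(\<Sum>B\<in>S. u B *\<^sub>R v B) = (\<Sum>B\<in>S. \<Sum>C\<in>S. (u B * w C) *\<^sub>R v B)"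
    by (simp add: scaleR_sum_left[symmetric] sum_distrib_left[symmetric] assms mult.commute)
  have e2: "(\<Sum>C\<in>S. w C *\<^sub>R v C) = (\<Sum>B\<in>S. \<Sum>C\<in>S. (u B * w C) *\<^sub>R v C)"
    apply (subst sum.swap)
    by (simp add: scaleR_sum_left[symmetric] sum_distrib_right[symmetric] assms)
  have "(\<Sum>B\<in>S. u B *\<^sub>R v B) - (\<Sum>C\<in>S. w C *\<^sub>R v C) = (\<Sum>B\<in>S. \<Sum>C\<in>S. (u B * w C) *\<^sub>R (v B - v C))"
    by (simp add: e1 e2 scaleR_diff_right sum_subtractf)
  hence "dist (\<Sum>B\<in>S. u B *\<^sub>R v B) (\<Sum>C\<in>S. w C *\<^sub>R v C) = norm (\<Sum>B\<in>S. \<Sum>C\<in>S. (u B * w C) *\<^sub>R (v B - v C))"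
    by (simp add: dist_norm)
  also have "\<dots> \<le> (\<Sum>B\<in>S. norm (\<Sum>C\<in>S. (u B * w C) *\<^sub>R (v B - v C)))" by (rule norm_sum)
  also have "\<dots> \<le> (\<Sum>B\<in>S. \<Sum>C\<in>S. norm ((u B * w C) *\<^sub>R (v B - v C)))"
    by (rule sum_mono) (rule norm_sum)
  also have "\<dots> = (\<Sum>B\<in>S. \<Sum>C\<in>S. u B * w C * dist (v B) (v C))"
    using assms(3,4) by (intro sum.cong refl) (simp add: dist_norm)
  finally show ?thesis .
qed

theorem proposition2p2:
  fixes E :: "'a::finite set" and Bs :: "'a set set"
  assumes "is_matroid_bases E Bs"
  shows "matroid_borsuk Bs = borsuk_number (matroid_polytope Bs)"
proof -
  let ?v = "indicator_vec :: 'a set \<Rightarrow> real ^ 'a"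
  define P where "P = matroid_polytope Bs"
  define N where "N = bases_diam Bs"
  have fin: "finite Bs" by simp
  have ne: "Bs \<noteq> {}" using assms by (simp add: is_matroid_bases_def)
  have finD: "finite ((\<lambda>(B, B'). basis_dist B B') ` (Bs \<times> Bs))" by simp
  have distle: "basis_dist B C \<le> N" if "B \<in> Bs" "C \<in> Bs" for B C
    unfolding N_def bases_diam_def using that by (intro Max_ge[OF finD]) auto
  obtain B0 C0 where B0: "B0 \<in> Bs" "C0 \<in> Bs" "basis_dist B0 C0 = N"
  proof -
    have "Max ((\<lambda>(B, B'). basis_dist B B') ` (Bs \<times> Bs)) \<in> (\<lambda>(B, B'). basis_dist B B') ` (Bs \<times> Bs)"
      using ne by (intro Max_in[OF finD]) auto
    then obtain p where p: "p \<in> Bs \<times> Bs" "N = (\<lambda>(B, B'). basis_dist B B') p"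
      unfolding N_def bases_diam_def by blast
    obtain B C where "p = (B, C)" by (cases p)
    thus ?thesis using that p by auto
  qed
  have cP: "compact P" unfolding P_def matroid_polytope_def
    by (rule finite_imp_compact_convex_hull) simp
  hence bP: "bounded P" by (rule compact_imp_bounded)
  have VP: "?v B \<in> P" if "B \<in> Bs" for B
    unfolding P_def matroid_polytope_def using that by (simp add: hull_inc)
  have gen: "dist x y \<le> sqrt N" if xP: "x \<in> P" and yP: "y \<in> P" for x y
  proof -
    obtain u where u: "\<forall>B\<in>Bs. 0 \<le> u B" "sum u Bs = 1" "(\<Sum>B\<in>Bs. u B *\<^sub>R ?v B) = x"
      using hull_repr xP unfolding P_def by blast
    obtain w where w: "\<forall>B\<in>Bs. 0 \<le> w B" "sum w Bs = 1" "(\<Sum>B\<in>Bs. w B *\<^sub>R ?v B) = y"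
      using hull_repr yP unfolding P_def by blast
    have "dist x y \<le> (\<Sum>B\<in>Bs. \<Sum>C\<in>Bs. u B * w C * dist (?v B) (?v C))"
      using dist_bound[of u Bs w ?v] u w by simp
    also have "\<dots> \<le> (\<Sum>B\<in>Bs. \<Sum>C\<in>Bs. u B * w C * sqrt N)"
      using u(1) w(1) distle by (intro sum_mono mult_left_mono) (auto simp: dist_iv)
    also have "\<dots> = sqrt N"
      by (simp add: sum_distrib_right[symmetric] sum_distrib_left[symmetric] u w)
    finally show ?thesis .
  qed
  have diamP: "diameter P = sqrt N"
  proof (rule antisym)
    show "diameter P \<le> sqrt N" using gen by (intro diameter_le) (auto simp: dist_norm)
    show "sqrt N \<le> diameter P"
      using diameter_bounded_bound[OF bP VP[OF B0(1)] VP[OF B0(2)]] B0 by (simp add: dist_iv)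
  qed
  show ?thesis
  proof (cases "card Bs = 1")
    case True
    then obtain B where B: "Bs = {B}" by (auto simp: card_Suc_eq)
    have P1: "P = {?v B}" unfolding P_def matroid_polytope_def B by simp
    have "{enat (card Q) | Q. finite Q \<and> partition_on P Q \<and> (\<forall>X\<in>Q. diameter X < diameter P)} = {}" (is "?S = {}")
    proof (safe)
      fix Q assume Q: "finite Q" "partition_on P Q" "\<forall>X\<in>Q. diameter X < diameter P"
      obtain X where X: "X \<in> Q" "?v B \<in> X" using Q(2) P1 unfolding partition_on_def by auto
      have "X \<subseteq> P" using Q(2) X(1) unfolding partition_on_def by auto
      hence "X = {?v B}" using X P1 by auto
      thus "enat (card Q) \<in> {}" using Q(3) X(1) P1 by auto
    qed
    hence "borsuk_number P = Inf {}" unfolding borsuk_number_def by (rule arg_cong)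
    hence "borsuk_number P = \<infinity>" by (simp add: top_enat_def)
    thus ?thesis using True unfolding matroid_borsuk_def P_def by simp
  next
    case False
    define SA where "SA = {enat (card Pm) | Pm. partition_on Bs Pm \<and> (\<forall>X\<in>Pm. bases_diam X < bases_diam Bs)}"
    define SB where "SB = {enat (card Q) | Q. finite Q \<and> partition_on P Q \<and> (\<forall>X\<in>Q. diameter X < diameter P)}"
    have L: "matroid_borsuk Bs = Inf SA" using False unfolding matroid_borsuk_def SA_def by simp
    have R: "borsuk_number (matroid_polytope Bs) = Inf SB" unfolding borsuk_number_def SB_def P_def by simp
    have AB: "Inf SB \<le> a" if "a \<in> SA" for a
    proof -
      from that obtain Pm where Pm: "a = enat (card Pm)" "partition_on Bs Pm"
        "\<forall>X\<in>Pm. bases_diam X < N" unfolding SA_def N_def by blast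
      define k where "k = card Pm"
      have finPm: "finite Pm" by simp
      have Pmne: "Pm \<noteq> {}" using Pm(2) ne unfolding partition_on_def by auto
      have kpos: "k > 0" using finPm Pmne k_def by (simp add: card_gt_0_iff)
      have XBs: "X \<subseteq> Bs" if "X \<in> Pm" for X using Pm(2) that unfolding partition_on_def by auto
      define U where "U x = (SOME u. (\<forall>B\<in>Bs. 0 \<le> u B) \<and> sum u Bs = 1 \<and> (\<Sum>B\<in>Bs. u B *\<^sub>R ?v B) = x)" for x
      have U: "(\<forall>B\<in>Bs. 0 \<le> U x B) \<and> sum (U x) Bs = 1 \<and> (\<Sum>B\<in>Bs. U x B *\<^sub>R ?v B) = x"
        if "x \<in> P" for x
        using someI_ex[OF hull_repr[of x Bs]] that unfolding U_def P_def by blast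
      have exX: "\<exists>X. X \<in> Pm \<and> 1 / real k \<le> sum (U x) X" if xP: "x \<in> P" for x
      proof (rule ccontr)
        assume "\<not> ?thesis" hence lt: "\<forall>X\<in>Pm. sum (U x) X < 1 / real k" by auto
        have "sum (U x) Bs = sum (U x) (\<Union>Pm)" using Pm(2) unfolding partition_on_def by simp
        also have "\<dots> = (\<Sum>X\<in>Pm. sum (U x) X)"
          using Pm(2) unfolding partition_on_def disjoint_def by (subst sum.Union_disjoint) auto
        also have "\<dots> < (\<Sum>X\<in>Pm. 1 / real k)" by (rule sum_strict_mono[OF finPm Pmne]) (use lt in auto)
        also have "\<dots> = 1" using kpos k_def Pmne by simp
        finally show False using U[OF xP] by simp
      qed
      define part where "part x = (SOME X. X \<in> Pm \<and> 1 / real k \<le> sum (U x) X)" for x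
      have partx: "part x \<in> Pm \<and> 1 / real k \<le> sum (U x) (part x)" if "x \<in> P" for x
        using someI_ex[OF exX[OF that]] unfolding part_def by blast
      define g where "g X = {x\<in>P. part x = X}" for X
      define Q where "Q = g ` Pm - {{}}"
      have finQ: "finite Q" using finPm unfolding Q_def by simp
      have cardQ: "card Q \<le> k" unfolding Q_def k_def
        by (metis Diff_subset card_image_le card_mono finite_imageI finPm order_trans)
      have partQ: "partition_on P Q"
        unfolding partition_on_def disjoint_def
      proof (intro conjI ballI impI)
        show "\<Union>Q = P"
        proof
          show "\<Union>Q \<subseteq> P" unfolding Q_def g_def by auto
          show "P \<subseteq> \<Union>Q"
          proof
            fix x assume x: "x \<in> P"
            hence "x \<in> g (part x)" unfolding g_def by auto
            moreover have "g (part x) \<in> Q" using partx[OF x] \<open>x \<in> g (part x)\<close> unfolding Q_def by auto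
            ultimately show "x \<in> \<Union>Q" by auto
          qed
        qed
        show "{} \<notin> Q" unfolding Q_def by auto
        fix A A' assume AA: "A \<in> Q" "A' \<in> Q" "A \<noteq> A'"
        then obtain X X' where XX: "A = g X" "A' = g X'" unfolding Q_def by auto
        thus "A \<inter> A' = {}" using AA(3) unfolding g_def by auto
      qed
      define \<delta> where "\<delta> = sqrt (real N) - sqrt (real N - 1)"
      have dpos: "\<delta> > 0" unfolding \<delta>_def by simp
      have bound: "dist x y \<le> sqrt N - \<delta> * (1 / real k) * (1 / real k)"
        if X: "X \<in> Pm" and xP: "x \<in> P" and yP: "y \<in> P" and px: "part x = X" and py: "part y = X" for X x y
      proof -
        note ux = U[OF xP] and uy = U[OF yP]
        define ind where "ind B = (if B \<in> X then 1 else 0::real)" for B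
        have pt: "dist (?v B) (?v C) \<le> sqrt N - \<delta> * ind B * ind C" if "B \<in> Bs" "C \<in> Bs" for B C
        proof (cases "B \<in> X \<and> C \<in> X")
          case True
          have "basis_dist B C \<le> bases_diam X" unfolding bases_diam_def using True
            by (intro Max_ge) auto
          hence "basis_dist B C < N" using Pm(3) X by auto
          hence "real (basis_dist B C) \<le> real N - 1" by linarith
          thus ?thesis using True by (simp add: dist_iv ind_def \<delta>_def)
        next
          case False then show ?thesis using distle that by (auto simp: dist_iv ind_def)
        qed
        have "dist x y \<le> (\<Sum>B\<in>Bs. \<Sum>C\<in>Bs. U x B * U y C * dist (?v B) (?v C))"
          using dist_bound[of "U x" Bs "U y" ?v] ux uy by simp
        also have "\<dots> \<le> (\<Sum>B\<in>Bs. \<Sum>C\<in>Bs. U x B * U y C * (sqrt N - \<delta> * ind B * ind C))"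
          using ux uy pt by (intro sum_mono mult_left_mono) auto
        also have "\<dots> = (\<Sum>B\<in>Bs. \<Sum>C\<in>Bs. sqrt N * (U x B * U y C)) - \<delta> * (\<Sum>B\<in>Bs. \<Sum>C\<in>Bs. (U x B * ind B) * (U y C * ind C))"
          by (simp add: sum_subtractf sum_distrib_left algebra_simps)
        also have "\<dots> = sqrt N - \<delta> * ((\<Sum>B\<in>Bs. U x B * ind B) * (\<Sum>C\<in>Bs. U y C * ind C))"
          using ux uy by (simp add: sum_product[symmetric] sum_distrib_left[symmetric] sum_distrib_right[symmetric])
        also have "(\<Sum>B\<in>Bs. U x B * ind B) = sum (U x) X"
        proof -
          have "sum (U x) X = sum (U x) (Bs \<inter> X)" using XBs[OF X] by (simp add: Int_absorb1)
          also have "\<dots> = (\<Sum>B\<in>Bs. U x B * ind B)" by (subst sum.inter_restrict) (auto simp: ind_def intro: sum.cong)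
          finally show ?thesis by simp
        qed
        also have "(\<Sum>C\<in>Bs. U y C * ind C) = sum (U y) X"
        proof -
          have "sum (U y) X = sum (U y) (Bs \<inter> X)" using XBs[OF X] by (simp add: Int_absorb1)
          also have "\<dots> = (\<Sum>B\<in>Bs. U y B * ind B)" by (subst sum.inter_restrict) (auto simp: ind_def intro: sum.cong)
          finally show ?thesis by simp
        qed
        also have "sqrt N - \<delta> * (sum (U x) X * sum (U y) X) \<le> sqrt N - \<delta> * (1 / real k) * (1 / real k)"
        proof -
          have a: "1 / real k \<le> sum (U x) X" using partx[OF xP] px by simp
          have b: "1 / real k \<le> sum (U y) X" using partx[OF yP] py by simp
          have "(1 / real k) * (1 / real k) \<le> sum (U x) X * sum (U y) X"
            by (rule mult_mono[OF a b]) (use a kpos in \<open>auto intro: order_trans[OF _ a]\<close>)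
          hence "\<delta> * ((1 / real k) * (1 / real k)) \<le> \<delta> * (sum (U x) X * sum (U y) X)"
            using dpos by (intro mult_left_mono) auto
          thus ?thesis by (simp add: mult.assoc)
        qed
        finally show ?thesis .
      qed
      have "\<forall>A\<in>Q. diameter A < diameter P"
      proof
        fix A assume "A \<in> Q"
        then obtain X where X: "X \<in> Pm" "A = g X" "A \<noteq> {}" unfolding Q_def by auto
        have "diameter A \<le> sqrt N - \<delta> * (1 / real k) * (1 / real k)"
        proof (rule diameter_le)
          show "A \<noteq> {} \<or> 0 \<le> sqrt N - \<delta> * (1 / real k) * (1 / real k)" using X by simp
          fix x y assume "x \<in> A" "y \<in> A"
          hence "x \<in> P" "y \<in> P" "part x = X" "part y = X" using X unfolding g_def by auto
          thus "norm (x - y) \<le> sqrt N - \<delta> * (1 / real k) * (1 / real k)"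
            using bound[OF X(1)] by (simp add: dist_norm[symmetric])
        qed
        also have "\<dots> < sqrt N" using dpos kpos by simp
        finally show "diameter A < diameter P" using diamP by simp
      qed
      hence "enat (card Q) \<in> SB" using finQ partQ unfolding SB_def by blast
      hence "Inf SB \<le> enat (card Q)" by (rule Inf_lower)
      also have "\<dots> \<le> a" using Pm(1) cardQ k_def by simp
      finally show ?thesis .
    qed
    have BA: "Inf SA \<le> b" if "b \<in> SB" for b
    proof -
      from that obtain Q where Q: "b = enat (card Q)" "finite Q" "partition_on P Q"
        "\<forall>X\<in>Q. diameter X < diameter P" unfolding SB_def by blast
      define f where "f X = {B\<in>Bs. ?v B \<in> X}" for X
      define Pm where "Pm = f ` Q - {{}}"
      have cardle: "card Pm \<le> card Q" unfolding Pm_def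
        by (metis Diff_subset card_image_le card_mono finite_imageI Q(2) order_trans)
      have part: "partition_on Bs Pm"
        unfolding partition_on_def disjoint_def
      proof (intro conjI ballI impI)
        show "\<Union>Pm = Bs"
        proof
          show "\<Union>Pm \<subseteq> Bs" unfolding Pm_def f_def by auto
          show "Bs \<subseteq> \<Union>Pm"
          proof
            fix B assume B: "B \<in> Bs"
            then have "?v B \<in> \<Union>Q" using VP Q(3) unfolding partition_on_def by auto
            then obtain X where X: "X \<in> Q" "?v B \<in> X" by auto
            hence "B \<in> f X" using B unfolding f_def by auto
            moreover have "f X \<in> Pm" using X(1) \<open>B \<in> f X\<close> unfolding Pm_def by auto
            ultimately show "B \<in> \<Union>Pm" by auto
          qed
        qed
        show "{} \<notin> Pm" unfolding Pm_def by auto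
        fix A A' assume AA: "A \<in> Pm" "A' \<in> Pm" "A \<noteq> A'"
        then obtain X X' where XX: "X \<in> Q" "X' \<in> Q" "A = f X" "A' = f X'" unfolding Pm_def by auto
        with AA have "X \<noteq> X'" by auto
        hence "X \<inter> X' = {}" using Q(3) XX(1,2) unfolding partition_on_def disjoint_def by auto
        thus "A \<inter> A' = {}" using XX unfolding f_def by auto
      qed
      have small: "\<forall>A\<in>Pm. bases_diam A < bases_diam Bs"
      proof
        fix A assume "A \<in> Pm"
        then obtain X where X: "X \<in> Q" "A = f X" "A \<noteq> {}" unfolding Pm_def by auto
        have "X \<subseteq> P" using Q(3) X(1) unfolding partition_on_def by auto
        hence bX: "bounded X" using bP bounded_subset by blast
        have lt: "basis_dist B C < N" if "B \<in> A" "C \<in> A" for B C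
        proof -
          have "sqrt (real (basis_dist B C)) = dist (?v B) (?v C)" by (simp add: dist_iv)
          also have "\<dots> \<le> diameter X" using that X(2) unfolding f_def
            by (intro diameter_bounded_bound[OF bX]) auto
          also have "\<dots> < sqrt N" using Q(4) X(1) diamP by auto
          finally show ?thesis by simp
        qed
        have "finite A" by simp
        have "bases_diam A < N" unfolding bases_diam_def
          using X(3) lt \<open>finite A\<close> by (subst Max_less_iff) auto
        thus "bases_diam A < bases_diam Bs" by (simp add: N_def)
      qed
      hence "enat (card Pm) \<in> SA" using part unfolding SA_def by blast
      hence "Inf SA \<le> enat (card Pm)" by (rule Inf_lower)
      also have "\<dots> \<le> b" using Q(1) cardle by simp
      finally show ?thesis .
    qed
    have "Inf SA \<le> Inf SB" using BA by (rule Inf_greatest)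
    moreover have "Inf SB \<le> Inf SA" using AB by (rule Inf_greatest)
    ultimately show ?thesis using L R by simp
  qed
qed

end
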